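(* Let $G$ be a group with finite generating set $S$. If the Cayley graph $Cay(G,S)$ is $\delta$-hyperbolic, then $G$ is $[4\delta+2,\,4\delta+3]$-chordal with respect to $S$.
   Context: $S^{\pm1}=S\cup S^{-1}\setminus\{e\}$; $Cay(G,S)$ has vertex set $G$, edges $\{g,gs\}$ ($s\in S^{\pm1}$), each edge isometric to $[0,1]$, with the path-length metric. A geodesic metric space is $\delta$-hyperbolic if every geodesic triangle is $\delta$-thin: each side lies in the closed $\delta$-neighborhood of the union of the other two sides. A relation $s_1\cdots s_n=e$ with $n>2$, $s_i\in S^{\pm1}$, is simple if $s_p\cdots s_q=e$ holds exactly when $(p,q)=(1,n)$. $G$ is $[i_0,k]$-chordal with respect to $S$ if for every simple relation $s_1\cdots s_n=e$ with $n\ge k$ there exist $1\le i\le i_0$, $i<j\le n$ and $s'_1,\dots,s'_r\in S^{\pm1}$ with $s_i\cdots s_j=s'_1\cdots s'_r$ and $r\le\min\{j-i,\,n-j+i-2\}$. *)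

theory Defs
  imports "HOL-Algebra.Algebra"
begin

definition Spm :: "('a, 'b) monoid_scheme \<Rightarrow> 'a set \<Rightarrow> 'a set" where
  "Spm G S = (S \<union> (\<lambda>s. inv\<^bsub>G\<^esub> s) ` S) - {\<one>\<^bsub>G\<^esub>}"

definition wprod :: "('a, 'b) monoid_scheme \<Rightarrow> 'a list \<Rightarrow> 'a" where
  "wprod G w = foldr (\<lambda>x y. x \<otimes>\<^bsub>G\<^esub> y) w \<one>\<^bsub>G\<^esub>"

text \<open>The subword s_p ... s_q of s_1 ... s_n (1-based indices).\<close>
definition subw :: "'a list \<Rightarrow> nat \<Rightarrow> nat \<Rightarrow> 'a list" where
  "subw xs p q = take (Suc q - p) (drop (p - 1) xs)"

definition simple_relation :: "('a, 'b) monoid_scheme \<Rightarrow> 'a set \<Rightarrow> 'a list \<Rightarrow> bool" where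
  "simple_relation G S xs \<longleftrightarrow>
     length xs > 2 \<and> set xs \<subseteq> Spm G S \<and>
     (\<forall>p q. 1 \<le> p \<and> p \<le> q \<and> q \<le> length xs \<longrightarrow>
        (wprod G (subw xs p q) = \<one>\<^bsub>G\<^esub> \<longleftrightarrow> (p = 1 \<and> q = length xs)))"

definition chordal :: "('a, 'b) monoid_scheme \<Rightarrow> 'a set \<Rightarrow> real \<Rightarrow> real \<Rightarrow> bool" where
  "chordal G S i0 k \<longleftrightarrow>
     (\<forall>xs. simple_relation G S xs \<and> real (length xs) \<ge> k \<longrightarrow>
        (\<exists>i j ys. 1 \<le> i \<and> real i \<le> i0 \<and> i < j \<and> j \<le> length xs \<and>
           set ys \<subseteq> Spm G S \<and> wprod G (subw xs i j) = wprod G ys \<and>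
           int (length ys) \<le> min (int j - int i) (int (length xs) - int j + int i - 2)))"

text \<open>Points: vertices V g, and interior edge points E a b t (on the edge {a,b}, at
  distance t from a). E a b t and E b a (1-t) represent the same point.\<close>
datatype 'a cpt = V 'a | E 'a 'a real

definition cadj :: "('a, 'b) monoid_scheme \<Rightarrow> 'a set \<Rightarrow> 'a \<Rightarrow> 'a \<Rightarrow> bool" where
  "cadj G S a b \<longleftrightarrow> a \<in> carrier G \<and> (\<exists>s \<in> Spm G S. b = a \<otimes>\<^bsub>G\<^esub> s)"

definition cpoints :: "('a, 'b) monoid_scheme \<Rightarrow> 'a set \<Rightarrow> 'a cpt set" where
  "cpoints G S = {V g | g. g \<in> carrier G} \<union> {E a b t | a b t. cadj G S a b \<and> 0 < t \<and> t < 1}"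

definition vdist :: "('a, 'b) monoid_scheme \<Rightarrow> 'a set \<Rightarrow> 'a \<Rightarrow> 'a \<Rightarrow> real" where
  "vdist G S a b = real (LEAST n. \<exists>w. set w \<subseteq> Spm G S \<and> length w = n \<and> a \<otimes>\<^bsub>G\<^esub> wprod G w = b)"

fun ends :: "'a cpt \<Rightarrow> ('a \<times> real) list" where
  "ends (V g) = [(g, 0)]"
| "ends (E a b t) = [(a, t), (b, 1 - t)]"

definition via :: "('a, 'b) monoid_scheme \<Rightarrow> 'a set \<Rightarrow> 'a cpt \<Rightarrow> 'a cpt \<Rightarrow> real" where
  "via G S p q = Min {x + vdist G S u v + y | u x v y. (u, x) \<in> set (ends p) \<and> (v, y) \<in> set (ends q)}"

text \<open>Path-length metric of the Cayley graph with unit-length edges.\<close>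
fun cdist :: "('a, 'b) monoid_scheme \<Rightarrow> 'a set \<Rightarrow> 'a cpt \<Rightarrow> 'a cpt \<Rightarrow> real" where
  "cdist G S (E a b t) (E c d u) =
     (if a = c \<and> b = d then min \<bar>t - u\<bar> (via G S (E a b t) (E c d u))
      else if a = d \<and> b = c then min \<bar>t - (1 - u)\<bar> (via G S (E a b t) (E c d u))
      else via G S (E a b t) (E c d u))"
| "cdist G S p q = via G S p q"

definition geodesic :: "('a, 'b) monoid_scheme \<Rightarrow> 'a set \<Rightarrow> (real \<Rightarrow> 'a cpt) \<Rightarrow> real \<Rightarrow> bool" where
  "geodesic G S \<gamma> L \<longleftrightarrow> 0 \<le> L \<and> \<gamma> ` {0..L} \<subseteq> cpoints G S \<and>
     (\<forall>s\<in>{0..L}. \<forall>t\<in>{0..L}. cdist G S (\<gamma> s) (\<gamma> t) = \<bar>s - t\<bar>)"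

definition in_nbhd :: "('a, 'b) monoid_scheme \<Rightarrow> 'a set \<Rightarrow> real \<Rightarrow> 'a cpt set \<Rightarrow> 'a cpt set \<Rightarrow> bool" where
  "in_nbhd G S \<delta> A B \<longleftrightarrow> (\<forall>p\<in>A. \<forall>\<epsilon>>0. \<exists>q\<in>B. cdist G S p q \<le> \<delta> + \<epsilon>)"

definition cayley_hyperbolic :: "('a, 'b) monoid_scheme \<Rightarrow> 'a set \<Rightarrow> real \<Rightarrow> bool" where
  "cayley_hyperbolic G S \<delta> \<longleftrightarrow>
     (\<forall>\<gamma>1 L1 \<gamma>2 L2 \<gamma>3 L3.
        geodesic G S \<gamma>1 L1 \<and> geodesic G S \<gamma>2 L2 \<and> geodesic G S \<gamma>3 L3 \<and>
        \<gamma>1 L1 = \<gamma>2 0 \<and> \<gamma>2 L2 = \<gamma>3 0 \<and> \<gamma>3 L3 = \<gamma>1 0 \<longrightarrow>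
        in_nbhd G S \<delta> (\<gamma>1 ` {0..L1}) (\<gamma>2 ` {0..L2} \<union> \<gamma>3 ` {0..L3}) \<and>
        in_nbhd G S \<delta> (\<gamma>2 ` {0..L2}) (\<gamma>1 ` {0..L1} \<union> \<gamma>3 ` {0..L3}) \<and>
        in_nbhd G S \<delta> (\<gamma>3 ` {0..L3}) (\<gamma>1 ` {0..L1} \<union> \<gamma>2 ` {0..L2}))"

end

theory Submission
  imports Defs
begin

context group begin

lemma Spm_carrier: "S \<subseteq> carrier G \<Longrightarrow> Spm G S \<subseteq> carrier G"
  unfolding Spm_def by auto

lemma Spm_inv: "S \<subseteq> carrier G \<Longrightarrow> s \<in> Spm G S \<Longrightarrow> inv s \<in> Spm G S"
  unfolding Spm_def by (auto simp: subsetD)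

lemma Spm_ne: "s \<in> Spm G S \<Longrightarrow> s \<noteq> \<one>"
  unfolding Spm_def by auto

lemma wprod_Nil[simp]: "wprod G [] = \<one>" by (simp add: wprod_def)
lemma wprod_Cons[simp]: "wprod G (x # w) = x \<otimes> wprod G w" by (simp add: wprod_def)

lemma wprod_closed: "set w \<subseteq> carrier G \<Longrightarrow> wprod G w \<in> carrier G"
  by (induction w) auto

lemma wprod_append: "set w \<subseteq> carrier G \<Longrightarrow> set v \<subseteq> carrier G \<Longrightarrow>
   wprod G (w @ v) = wprod G w \<otimes> wprod G v"
  by (induction w) (auto simp: wprod_closed m_assoc)

lemma wprod_inv: "set w \<subseteq> carrier G \<Longrightarrow> wprod G (rev (map (m_inv G) w)) = inv (wprod G w)"
proof (induction w)
  case Nil then show ?case by simp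
next
  case (Cons x w)
  then have "wprod G (rev (map (m_inv G) (x # w))) = wprod G (rev (map (m_inv G) w)) \<otimes> inv x"
  proof -
    have c: "set (rev (map (m_inv G) w)) \<subseteq> carrier G" "set [inv x] \<subseteq> carrier G"
      using Cons.prems by auto
    show ?thesis using wprod_append[OF c] Cons.prems by simp
  qed
  also have "\<dots> = inv (wprod G w) \<otimes> inv x" using Cons by simp
  also have "\<dots> = inv (x \<otimes> wprod G w)" using Cons by (simp add: inv_mult_group wprod_closed)
  finally show ?case by simp
qed

lemma word_exists:
  assumes SG: "S \<subseteq> carrier G" and x: "x \<in> generate G S"
  shows "\<exists>w. set w \<subseteq> Spm G S \<and> wprod G w = x"
  using x
proof (induction rule: generate.induct)
  case one then show ?case by (intro exI[of _ "[]"]) simp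
next
  case (incl h)
  show ?case
  proof (cases "h = \<one>")
    case True then show ?thesis by (intro exI[of _ "[]"]) simp
  next
    case False
    then have "h \<in> Spm G S" using incl unfolding Spm_def by auto
    then show ?thesis using incl SG by (intro exI[of _ "[h]"]) auto
  qed
next
  case (inv h)
  show ?case
  proof (cases "inv h = \<one>")
    case True then show ?thesis by (intro exI[of _ "[]"]) simp
  next
    case False
    then have "inv h \<in> Spm G S" using inv unfolding Spm_def by auto
    then show ?thesis using inv SG by (intro exI[of _ "[inv h]"]) (auto simp: subsetD)
  qed
next
  case (eng h1 h2)
  then obtain w1 w2 where "set w1 \<subseteq> Spm G S" "wprod G w1 = h1" "set w2 \<subseteq> Spm G S" "wprod G w2 = h2"
    by blast
  then show ?case using Spm_carrier[OF SG]
    by (intro exI[of _ "w1 @ w2"]) (auto simp: wprod_append)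
qed

definition vd :: "'a set \<Rightarrow> 'a \<Rightarrow> 'a \<Rightarrow> nat" where
  "vd S a b = (LEAST n. \<exists>w. set w \<subseteq> Spm G S \<and> length w = n \<and> a \<otimes> wprod G w = b)"

lemma vdist_vd: "vdist G S a b = real (vd S a b)"
  unfolding vdist_def vd_def by simp

lemma vd_le: "set w \<subseteq> Spm G S \<Longrightarrow> a \<otimes> wprod G w = b \<Longrightarrow> vd S a b \<le> length w"
  unfolding vd_def by (rule Least_le) blast

lemma vd_ex:
  assumes SG: "S \<subseteq> carrier G" and gen: "generate G S = carrier G"
    and a: "a \<in> carrier G" and b: "b \<in> carrier G"
  shows "\<exists>w. set w \<subseteq> Spm G S \<and> length w = vd S a b \<and> a \<otimes> wprod G w = b"
proof -
  obtain w where w: "set w \<subseteq> Spm G S" "wprod G w = inv a \<otimes> b"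
    using word_exists[OF SG, of "inv a \<otimes> b"] gen a b by auto
  then have "a \<otimes> wprod G w = b" using a b by (simp add: m_assoc[symmetric])
  then have "\<exists>n w. set w \<subseteq> Spm G S \<and> length w = n \<and> a \<otimes> wprod G w = b" using w by blast
  then show ?thesis unfolding vd_def by (rule LeastI_ex)
qed

context
  fixes S assumes SG: "S \<subseteq> carrier G" and gen: "generate G S = carrier G"
begin

lemma vd_tri:
  assumes a: "a \<in> carrier G" and b: "b \<in> carrier G" and c: "c \<in> carrier G"
  shows "vd S a c \<le> vd S a b + vd S b c"
proof -
  obtain w1 where w1: "set w1 \<subseteq> Spm G S" "length w1 = vd S a b" "a \<otimes> wprod G w1 = b"
    using vd_ex[OF SG gen a b] by blast
  obtain w2 where w2: "set w2 \<subseteq> Spm G S" "length w2 = vd S b c" "b \<otimes> wprod G w2 = c"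
    using vd_ex[OF SG gen b c] by blast
  have cc: "set w1 \<subseteq> carrier G" "set w2 \<subseteq> carrier G" using w1 w2 Spm_carrier[OF SG] by auto
  have "a \<otimes> wprod G (w1 @ w2) = c"
    using w1 w2 a by (simp add: wprod_append[OF cc] m_assoc[symmetric] wprod_closed[OF cc(1)] wprod_closed[OF cc(2)])
  then have "vd S a c \<le> length (w1 @ w2)" using w1 w2 by (intro vd_le) auto
  then show ?thesis using w1 w2 by simp
qed

lemma vd_sym_le:
  assumes a: "a \<in> carrier G" and b: "b \<in> carrier G"
  shows "vd S b a \<le> vd S a b"
proof -
  obtain w where w: "set w \<subseteq> Spm G S" "length w = vd S a b" "a \<otimes> wprod G w = b"
    using vd_ex[OF SG gen a b] by blast
  have cc: "set w \<subseteq> carrier G" using w Spm_carrier[OF SG] by auto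
  have s: "set (rev (map (m_inv G) w)) \<subseteq> Spm G S" using w Spm_inv[OF SG] by auto
  have "b \<otimes> wprod G (rev (map (m_inv G) w)) = a"
    using w(3) a by (auto simp: wprod_inv[OF cc] m_assoc wprod_closed[OF cc])
  then have "vd S b a \<le> length (rev (map (m_inv G) w))" using s by (intro vd_le) auto
  then show ?thesis using w by simp
qed

lemma vd_sym: "a \<in> carrier G \<Longrightarrow> b \<in> carrier G \<Longrightarrow> vd S b a = vd S a b"
  using vd_sym_le by (meson antisym)

lemma vd_refl: "a \<in> carrier G \<Longrightarrow> vd S a a = 0"
  using vd_le[of "[]" S a a] by simp

lemma vd_step:
  assumes a: "a \<in> carrier G" and s: "s \<in> Spm G S"
  shows "vd S a (a \<otimes> s) \<le> 1" "vd S (a \<otimes> s) a \<le> 1"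
proof -
  show "vd S a (a \<otimes> s) \<le> 1" using vd_le[of "[s]" S a "a \<otimes> s"] s Spm_carrier[OF SG] by auto
  then show "vd S (a \<otimes> s) a \<le> 1" using vd_sym s a Spm_carrier[OF SG] by auto
qed

end

end

fun Hf :: "('a \<Rightarrow> real) \<Rightarrow> 'a cpt \<Rightarrow> real" where
  "Hf h (V g) = h g"
| "Hf h (E a b t) = min (h a + t) (h b + 1 - t)"


lemma via_set_eq: "{x + vdist G S u v + y | u x v y. (u, x) \<in> set (ends p) \<and> (v, y) \<in> set (ends q)}
  = (\<lambda>((u,x),(v,y)). x + vdist G S u v + y) ` (set (ends p) \<times> set (ends q))"
  by (auto simp: image_iff) (metis case_prod_conv)

lemma ends_ne: "ends p \<noteq> []" by (cases p) auto

lemma via_le: "(u, x) \<in> set (ends p) \<Longrightarrow> (v, y) \<in> set (ends q) \<Longrightarrow> via G S p q \<le> x + vdist G S u v + y"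
  unfolding via_def via_set_eq by (rule Min_le) force+

lemma via_ge: "(\<And>u x v y. (u, x) \<in> set (ends p) \<Longrightarrow> (v, y) \<in> set (ends q) \<Longrightarrow> B \<le> x + vdist G S u v + y)
   \<Longrightarrow> B \<le> via G S p q"
  unfolding via_def via_set_eq
  apply (subst Min_ge_iff)
  using ends_ne[of p] ends_ne[of q] by (auto simp: neq_Nil_conv)

lemma cdist_le_via: "cdist G S p q \<le> via G S p q"
  by (cases p; cases q) (auto simp del: cdist.simps, auto)

lemma cdist_le_ends: "(u, x) \<in> set (ends p) \<Longrightarrow> (v, y) \<in> set (ends q) \<Longrightarrow> cdist G S p q \<le> x + vdist G S u v + y"
  by (meson cdist_le_via via_le order_trans)

context group begin
context
  fixes S assumes SG: "S \<subseteq> carrier G" and gen: "generate G S = carrier G"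
begin

lemma ends_facts:
  assumes HL: "\<forall>u\<in>carrier G. \<forall>v\<in>carrier G. h v \<le> h u + vdist G S u v"
    and p: "p \<in> cpoints G S" and ux: "(u, x) \<in> set (ends p)"
  shows "u \<in> carrier G \<and> 0 \<le> x \<and> Hf h p \<le> h u + x \<and> h u \<le> Hf h p + x"
proof (cases p)
  case (V g)
  then show ?thesis using p ux unfolding cpoints_def by auto
next
  case (E a b t)
  then have ab: "cadj G S a b" "0 < t" "t < 1" using p unfolding cpoints_def by auto
  then obtain s where s: "s \<in> Spm G S" "b = a \<otimes> s" "a \<in> carrier G" unfolding cadj_def by auto
  have bc: "b \<in> carrier G" using s Spm_carrier[OF SG] by auto
  have v1: "vdist G S a b \<le> 1" "vdist G S b a \<le> 1" using vd_step[OF SG gen s(3) s(1)] s(2) by (simp_all add: vdist_vd)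
  have "h b \<le> h a + 1" using HL[rule_format, of a b] s(3) bc v1 by linarith
  moreover have "h a \<le> h b + 1" using HL[rule_format, of b a] s(3) bc v1 by linarith
  ultimately show ?thesis using ux E ab s bc by auto
qed

lemma lip:
  assumes HL: "\<forall>u\<in>carrier G. \<forall>v\<in>carrier G. h v \<le> h u + vdist G S u v"
    and p: "p \<in> cpoints G S" and q: "q \<in> cpoints G S"
  shows "\<bar>Hf h p - Hf h q\<bar> \<le> cdist G S p q"
proof -
  have vb: "\<bar>Hf h p - Hf h q\<bar> \<le> via G S p q"
  proof (rule via_ge)
    fix u x v y assume ux: "(u, x) \<in> set (ends p)" and vy: "(v, y) \<in> set (ends q)"
    have f1: "u \<in> carrier G \<and> 0 \<le> x \<and> Hf h p \<le> h u + x \<and> h u \<le> Hf h p + x"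
      using ends_facts[OF HL p ux] .
    have f2: "v \<in> carrier G \<and> 0 \<le> y \<and> Hf h q \<le> h v + y \<and> h v \<le> Hf h q + y"
      using ends_facts[OF HL q vy] .
    have "h v \<le> h u + vdist G S u v" using HL f1 f2 by blast
    moreover have "h u \<le> h v + vdist G S u v" using HL[rule_format, of v u] f1 f2 vd_sym[OF SG gen, of u v] by (auto simp: vdist_vd)
    ultimately show "\<bar>Hf h p - Hf h q\<bar> \<le> x + vdist G S u v + y" using f1 f2 by linarith
  qed
  show ?thesis
  proof (cases "\<exists>a b t c d u. p = E a b t \<and> q = E c d u")
    case False
    then have "cdist G S p q = via G S p q"
      by (cases p; cases q) (simp only: cdist.simps; blast)+
    then show ?thesis using vb by simp
  next
    case True
    then obtain a b t c d u where E: "p = E a b t" and E': "q = E c d u" by blast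
    show ?thesis
    proof (cases "a = c \<and> b = d")
      case T1: True
      have "\<bar>Hf h p - Hf h q\<bar> \<le> \<bar>t - u\<bar>" using E E' T1 by (auto simp: abs_le_iff)
      moreover have "cdist G S p q = min \<bar>t - u\<bar> (via G S p q)" unfolding E E' cdist.simps(1) using T1 by (simp only: if_True simp_thms)
      ultimately show ?thesis using vb by simp
    next
      case F1: False
      show ?thesis
      proof (cases "a = d \<and> b = c")
        case T2: True
        have "\<bar>Hf h p - Hf h q\<bar> \<le> \<bar>t - (1 - u)\<bar>" using E E' T2 by (auto simp: abs_le_iff)
        moreover have "cdist G S p q = min \<bar>t - (1 - u)\<bar> (via G S p q)" unfolding E E' cdist.simps(1) using T2 F1 by (simp only: if_True if_False simp_thms)
        ultimately show ?thesis using vb by simp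
      next
        case F2: False
        have "cdist G S p q = via G S p q" unfolding E E' cdist.simps(1) using F1 F2 by (simp only: if_False)
        then show ?thesis using vb by simp
      qed
    qed
  qed
qed

end
end


definition gv :: "('a, 'b) monoid_scheme \<Rightarrow> 'a list \<Rightarrow> nat \<Rightarrow> 'a" where
  "gv G xs k = wprod G (take k xs)"

definition Pc :: "('a, 'b) monoid_scheme \<Rightarrow> 'a list \<Rightarrow> real \<Rightarrow> 'a cpt" where
  "Pc G xs x = (if x = of_int \<lfloor>x\<rfloor> then V (gv G xs (nat \<lfloor>x\<rfloor>))
     else E (gv G xs (nat \<lfloor>x\<rfloor>)) (gv G xs (Suc (nat \<lfloor>x\<rfloor>))) (x - of_int \<lfloor>x\<rfloor>))"

lemma Pc_int[simp]: "Pc G xs (real k) = V (gv G xs k)"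
  unfolding Pc_def by simp

context group begin
context
  fixes S xs assumes SG: "S \<subseteq> carrier G" and gen: "generate G S = carrier G"
    and sr: "simple_relation G S xs"
begin

lemma xs_Spm: "set xs \<subseteq> Spm G S" and n2: "length xs > 2"
  using sr unfolding simple_relation_def by auto

lemma xs_carrier: "set xs \<subseteq> carrier G"
  using xs_Spm Spm_carrier[OF SG] by auto

lemma gv_carrier: "gv G xs k \<in> carrier G"
  unfolding gv_def using xs_carrier set_take_subset by (metis order_trans wprod_closed)

lemma gv_0: "gv G xs 0 = \<one>" unfolding gv_def by simp

lemma gv_sub: assumes "1 \<le> i" "i \<le> j" "j \<le> length xs"
  shows "gv G xs j = gv G xs (i - 1) \<otimes> wprod G (subw xs i j)"
proof -
  have "take j xs = take (i - 1) xs @ subw xs i j"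
    unfolding subw_def using assms take_add[of "i - 1" "Suc j - i" xs] by simp
  moreover have "set (take (i - 1) xs) \<subseteq> carrier G" "set (subw xs i j) \<subseteq> carrier G"
    using xs_carrier unfolding subw_def by (meson order_trans set_take_subset set_drop_subset)+
  ultimately show ?thesis unfolding gv_def by (simp add: wprod_append)
qed

lemma gv_n: "gv G xs (length xs) = \<one>"
proof -
  have "wprod G (subw xs 1 (length xs)) = \<one>" using sr unfolding simple_relation_def by auto
  then show ?thesis using gv_sub[of 1 "length xs"] n2 by (simp add: gv_0)
qed

lemma vd_fwd: assumes "k \<le> l" "l \<le> length xs" shows "vd S (gv G xs k) (gv G xs l) \<le> l - k"
proof -
  have "gv G xs l = gv G xs k \<otimes> wprod G (subw xs (Suc k) l)" 
  proof (cases "k = l")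
    case True then show ?thesis by (simp add: subw_def gv_carrier)
  qed (use gv_sub[of "Suc k" l] assms in simp)
  moreover have "set (subw xs (Suc k) l) \<subseteq> Spm G S" using xs_Spm unfolding subw_def
    by (meson order_trans set_take_subset set_drop_subset)
  ultimately have "vd S (gv G xs k) (gv G xs l) \<le> length (subw xs (Suc k) l)" by (intro vd_le) auto
  then show ?thesis unfolding subw_def using assms by simp
qed

lemma vd_bwd: assumes "k \<le> l" "l \<le> length xs" shows "vd S (gv G xs l) (gv G xs k) \<le> l - k"
  using vd_fwd[OF assms] vd_sym[OF SG gen gv_carrier gv_carrier] by metis

lemma Pc_cpoints: assumes "0 \<le> x" "x \<le> real (length xs)" shows "Pc G xs x \<in> cpoints G S"
proof (cases "x = of_int \<lfloor>x\<rfloor>")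
  case True then show ?thesis unfolding Pc_def using gv_carrier by (simp add: cpoints_def)
next
  case False
  then have lt: "nat \<lfloor>x\<rfloor> < length xs" using assms
  proof -
    have "of_int \<lfloor>x\<rfloor> < x" using False of_int_floor_le[of x] by linarith
    have "x \<noteq> real (length xs)" using False by (metis floor_of_nat of_int_of_nat_eq)
    then have "x < real (length xs)" using assms by linarith
    then have "\<lfloor>x\<rfloor> < int (length xs)" by (simp add: floor_less_iff)
    then show ?thesis using assms by linarith
  qed
  have "gv G xs (Suc (nat \<lfloor>x\<rfloor>)) = gv G xs (nat \<lfloor>x\<rfloor>) \<otimes> xs ! nat \<lfloor>x\<rfloor>"
    using gv_sub[of "Suc (nat \<lfloor>x\<rfloor>)" "Suc (nat \<lfloor>x\<rfloor>)"] lt xs_carrier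
    unfolding subw_def by (simp add: Cons_nth_drop_Suc[symmetric] subset_iff)
  moreover have "xs ! nat \<lfloor>x\<rfloor> \<in> Spm G S" using lt xs_Spm by auto
  ultimately have "cadj G S (gv G xs (nat \<lfloor>x\<rfloor>)) (gv G xs (Suc (nat \<lfloor>x\<rfloor>)))"
    unfolding cadj_def using gv_carrier by auto
  moreover have "0 < x - of_int \<lfloor>x\<rfloor>" "x - of_int \<lfloor>x\<rfloor> < 1" using False
    using False real_of_int_floor_add_one_gt[of x] of_int_floor_le[of x] by (linarith, linarith)
  ultimately show ?thesis unfolding Pc_def cpoints_def using False by (simp only: if_False) blast
qed


lemma ends_Pc:
  assumes "0 \<le> x" "x \<le> real (length xs)" "(u, y) \<in> set (ends (Pc G xs x))"
  shows "\<exists>k. k \<le> length xs \<and> \<lfloor>x\<rfloor> \<le> int k \<and> int k \<le> \<lfloor>x\<rfloor> + 1 \<and> u = gv G xs k \<and> y = \<bar>x - real k\<bar>"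
proof (cases "x = of_int \<lfloor>x\<rfloor>")
  case True
  then have "u = gv G xs (nat \<lfloor>x\<rfloor>)" "y = 0" using assms(3) unfolding Pc_def by auto
  moreover have "nat \<lfloor>x\<rfloor> \<le> length xs" using assms by linarith
  moreover have "real (nat \<lfloor>x\<rfloor>) = x" using True assms(1) by linarith
  ultimately show ?thesis using assms(1) by (intro exI[of _ "nat \<lfloor>x\<rfloor>"]) auto
next
  case False
  have "of_int \<lfloor>x\<rfloor> < x" using False of_int_floor_le[of x] by linarith
  have "x \<noteq> real (length xs)" using False by (metis floor_of_nat of_int_of_nat_eq)
  then have "x < real (length xs)" using assms by linarith
  then have lt: "\<lfloor>x\<rfloor> < int (length xs)" by (simp add: floor_less_iff)
  have "(u = gv G xs (nat \<lfloor>x\<rfloor>) \<and> y = x - of_int \<lfloor>x\<rfloor>) \<or>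
        (u = gv G xs (Suc (nat \<lfloor>x\<rfloor>)) \<and> y = 1 - (x - of_int \<lfloor>x\<rfloor>))"
    using assms(3) False unfolding Pc_def by auto
  then show ?thesis
  proof
    assume h: "u = gv G xs (nat \<lfloor>x\<rfloor>) \<and> y = x - of_int \<lfloor>x\<rfloor>"
    show ?thesis using h lt assms(1) of_int_floor_le[of x]
      by (intro exI[of _ "nat \<lfloor>x\<rfloor>"]) auto
  next
    assume h: "u = gv G xs (Suc (nat \<lfloor>x\<rfloor>)) \<and> y = 1 - (x - of_int \<lfloor>x\<rfloor>)"
    have f0: "0 \<le> \<lfloor>x\<rfloor>" using assms(1) by simp
    have "Suc (nat \<lfloor>x\<rfloor>) \<le> length xs" using lt f0 by (simp add: nat_less_iff Suc_le_eq)
    moreover have "\<bar>x - real (Suc (nat \<lfloor>x\<rfloor>))\<bar> = 1 - (x - of_int \<lfloor>x\<rfloor>)"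
    proof -
      have e: "real (Suc (nat \<lfloor>x\<rfloor>)) = of_int \<lfloor>x\<rfloor> + 1" using f0 by simp
      have "x - real (Suc (nat \<lfloor>x\<rfloor>)) < 0" using e real_of_int_floor_add_one_gt[of x] by linarith
      from abs_of_neg[OF this] show ?thesis using e by linarith
    qed
    ultimately show ?thesis using h f0
      by (intro exI[of _ "Suc (nat \<lfloor>x\<rfloor>)"]) auto
  qed
qed

lemma ends_floor:
  assumes "0 \<le> x"
  shows "(gv G xs (nat \<lfloor>x\<rfloor>), x - of_int \<lfloor>x\<rfloor>) \<in> set (ends (Pc G xs x))"
  unfolding Pc_def by auto

lemma ends_ceil:
  assumes "0 \<le> x"
  shows "(gv G xs (nat \<lceil>x\<rceil>), of_int \<lceil>x\<rceil> - x) \<in> set (ends (Pc G xs x))"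
proof (cases "x = of_int \<lfloor>x\<rfloor>")
  case True
  then have "\<lceil>x\<rceil> = \<lfloor>x\<rfloor>" by (metis ceiling_of_int)
  then show ?thesis using True unfolding Pc_def by auto
next
  case False
  then have "\<lceil>x\<rceil> = \<lfloor>x\<rfloor> + 1" by (metis ceiling_altdef)
  moreover have "0 \<le> \<lfloor>x\<rfloor>" using assms by simp
  then have "nat (\<lfloor>x\<rfloor> + 1) = Suc (nat \<lfloor>x\<rfloor>)" by (simp add: nat_add_distrib)
  ultimately show ?thesis using False unfolding Pc_def by auto
qed

lemma Pc_upper:
  assumes s: "0 \<le> s" "s \<le> real (length xs)" and t: "0 \<le> t" "t \<le> real (length xs)"
  shows "cdist G S (Pc G xs s) (Pc G xs t) \<le> \<bar>s - t\<bar>"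
proof (cases "s \<noteq> of_int \<lfloor>s\<rfloor> \<and> t \<noteq> of_int \<lfloor>t\<rfloor> \<and> \<lfloor>s\<rfloor> = \<lfloor>t\<rfloor>")
  case same: True
  then have "cdist G S (Pc G xs s) (Pc G xs t) = min \<bar>(s - of_int \<lfloor>s\<rfloor>) - (t - of_int \<lfloor>t\<rfloor>)\<bar> (via G S (Pc G xs s) (Pc G xs t))"
    unfolding Pc_def using same by simp
  then show ?thesis using same by simp
next
  case nsame: False
  have fl: "of_int \<lfloor>x\<rfloor> \<le> x" "x \<le> of_int \<lceil>x\<rceil>" for x :: real by auto
  show ?thesis
  proof (cases "s \<le> t")
    case True
    have ct: "\<lceil>s\<rceil> \<le> \<lfloor>t\<rfloor>"
    proof (cases "s = of_int \<lfloor>s\<rfloor>")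
      case True
      then show ?thesis using \<open>s \<le> t\<close> by (metis ceiling_of_int le_floor_iff)
    next
      case F: False
      then have c: "\<lceil>s\<rceil> = \<lfloor>s\<rfloor> + 1" by (metis ceiling_altdef)
      show ?thesis
      proof (cases "t = of_int \<lfloor>t\<rfloor>")
        case True
        then show ?thesis using \<open>s \<le> t\<close> by (metis ceiling_le_iff)
      next
        case False
        then have "\<lfloor>s\<rfloor> \<noteq> \<lfloor>t\<rfloor>" using F nsame by blast
        moreover have "\<lfloor>s\<rfloor> \<le> \<lfloor>t\<rfloor>" using \<open>s \<le> t\<close> by (simp add: floor_mono)
        ultimately show ?thesis using c by simp
      qed
    qed
    have c0: "0 \<le> \<lceil>s\<rceil>" using s by simp
    have "cdist G S (Pc G xs s) (Pc G xs t) \<le> (of_int \<lceil>s\<rceil> - s) + vdist G S (gv G xs (nat \<lceil>s\<rceil>)) (gv G xs (nat \<lfloor>t\<rfloor>)) + (t - of_int \<lfloor>t\<rfloor>)"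
      by (rule cdist_le_ends[OF ends_ceil[OF s(1)] ends_floor[OF t(1)]])
    also have "vdist G S (gv G xs (nat \<lceil>s\<rceil>)) (gv G xs (nat \<lfloor>t\<rfloor>)) \<le> real (nat \<lfloor>t\<rfloor> - nat \<lceil>s\<rceil>)"
      unfolding vdist_vd using vd_fwd[of "nat \<lceil>s\<rceil>" "nat \<lfloor>t\<rfloor>"] ct t by linarith
    also have "real (nat \<lfloor>t\<rfloor> - nat \<lceil>s\<rceil>) = of_int \<lfloor>t\<rfloor> - of_int \<lceil>s\<rceil>"
    proof -
      have "nat \<lceil>s\<rceil> \<le> nat \<lfloor>t\<rfloor>" using nat_mono[OF ct] .
      then have "real (nat \<lfloor>t\<rfloor> - nat \<lceil>s\<rceil>) = real (nat \<lfloor>t\<rfloor>) - real (nat \<lceil>s\<rceil>)" by (simp add: of_nat_diff)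
      then show ?thesis using ct c0 by simp
    qed
    finally show ?thesis using True by simp
  next
    case False
    then have ts: "t \<le> s" by simp
    have ct: "\<lceil>t\<rceil> \<le> \<lfloor>s\<rfloor>"
    proof (cases "t = of_int \<lfloor>t\<rfloor>")
      case True
      then show ?thesis using ts by (metis ceiling_of_int le_floor_iff)
    next
      case F: False
      then have c: "\<lceil>t\<rceil> = \<lfloor>t\<rfloor> + 1" by (metis ceiling_altdef)
      show ?thesis
      proof (cases "s = of_int \<lfloor>s\<rfloor>")
        case True
        then show ?thesis using ts by (metis ceiling_le_iff)
      next
        case False
        then have "\<lfloor>s\<rfloor> \<noteq> \<lfloor>t\<rfloor>" using F nsame by blast
        moreover have "\<lfloor>t\<rfloor> \<le> \<lfloor>s\<rfloor>" using ts by (simp add: floor_mono)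
        ultimately show ?thesis using c by simp
      qed
    qed
    have c0: "0 \<le> \<lceil>t\<rceil>" using t by simp
    have "cdist G S (Pc G xs s) (Pc G xs t) \<le> (s - of_int \<lfloor>s\<rfloor>) + vdist G S (gv G xs (nat \<lfloor>s\<rfloor>)) (gv G xs (nat \<lceil>t\<rceil>)) + (of_int \<lceil>t\<rceil> - t)"
      by (rule cdist_le_ends[OF ends_floor[OF s(1)] ends_ceil[OF t(1)]])
    also have "vdist G S (gv G xs (nat \<lfloor>s\<rfloor>)) (gv G xs (nat \<lceil>t\<rceil>)) \<le> real (nat \<lfloor>s\<rfloor> - nat \<lceil>t\<rceil>)"
      unfolding vdist_vd using vd_bwd[of "nat \<lceil>t\<rceil>" "nat \<lfloor>s\<rfloor>"] ct s by linarith
    also have "real (nat \<lfloor>s\<rfloor> - nat \<lceil>t\<rceil>) = of_int \<lfloor>s\<rfloor> - of_int \<lceil>t\<rceil>"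
    proof -
      have "nat \<lceil>t\<rceil> \<le> nat \<lfloor>s\<rfloor>" using nat_mono[OF ct] .
      then have "real (nat \<lfloor>s\<rfloor> - nat \<lceil>t\<rceil>) = real (nat \<lfloor>s\<rfloor>) - real (nat \<lceil>t\<rceil>)" by (simp add: of_nat_diff)
      then show ?thesis using ct c0 by simp
    qed
    finally show ?thesis using ts by simp
  qed
qed

lemma Hf_lower:
  assumes x: "real lo \<le> x" "x \<le> real (length xs)"
    and Fk: "\<And>k. lo \<le> k \<Longrightarrow> k \<le> length xs \<Longrightarrow> F (real k) \<le> h (gv G xs k)"
    and FL: "\<And>a b. F a \<le> F b + \<bar>a - b\<bar>"
  shows "F x \<le> Hf h (Pc G xs x)"
proof -
  have x0: "0 \<le> x" using x by linarith
  have key: "F x \<le> h u + y" if uy: "(u, y) \<in> set (ends (Pc G xs x))" for u y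
  proof -
    obtain k where k: "k \<le> length xs" "\<lfloor>x\<rfloor> \<le> int k" "int k \<le> \<lfloor>x\<rfloor> + 1" "u = gv G xs k" "y = \<bar>x - real k\<bar>"
      using ends_Pc[OF x0 x(2) uy] by blast
    have "int lo \<le> \<lfloor>x\<rfloor>" using x by (simp add: le_floor_iff)
    then have "lo \<le> k" using k by linarith
    then have "F (real k) \<le> h u" using Fk[of k] k by simp
    then show ?thesis using k FL[of x "real k"] by linarith
  qed
  show ?thesis
  proof (cases "x = of_int \<lfloor>x\<rfloor>")
    case True
    then show ?thesis using key[of "gv G xs (nat \<lfloor>x\<rfloor>)" 0] unfolding Pc_def by simp
  next
    case False
    have "F x \<le> h (gv G xs (nat \<lfloor>x\<rfloor>)) + (x - of_int \<lfloor>x\<rfloor>)"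
      using key ends_floor[OF x0] by blast
    moreover have "F x \<le> h (gv G xs (Suc (nat \<lfloor>x\<rfloor>))) + (1 - (x - of_int \<lfloor>x\<rfloor>))"
      using key[of "gv G xs (Suc (nat \<lfloor>x\<rfloor>))" "1 - (x - of_int \<lfloor>x\<rfloor>)"] False unfolding Pc_def by simp
    ultimately show ?thesis using False unfolding Pc_def by simp
  qed
qed

lemma Hf_upper:
  assumes x: "0 \<le> x" "x \<le> real (length xs)"
    and hk: "\<And>k. k \<le> length xs \<Longrightarrow> h (gv G xs k) \<le> real k \<and> h (gv G xs k) \<le> real (length xs) - real k"
  shows "Hf h (Pc G xs x) \<le> min x (real (length xs) - x)"
proof (cases "x = of_int \<lfloor>x\<rfloor>")
  case True
  have "nat \<lfloor>x\<rfloor> \<le> length xs" using x by linarith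
  moreover have "real (nat \<lfloor>x\<rfloor>) = x" using True x by linarith
  ultimately show ?thesis using hk[of "nat \<lfloor>x\<rfloor>"] True unfolding Pc_def by simp
next
  case False
  have "of_int \<lfloor>x\<rfloor> < x" using False of_int_floor_le[of x] by linarith
  have "x \<noteq> real (length xs)" using False by (metis floor_of_nat of_int_of_nat_eq)
  then have "x < real (length xs)" using x by linarith
  then have lt: "\<lfloor>x\<rfloor> < int (length xs)" by (simp add: floor_less_iff)
  have r: "real (nat \<lfloor>x\<rfloor>) = of_int \<lfloor>x\<rfloor>" using x by simp
  have a: "h (gv G xs (nat \<lfloor>x\<rfloor>)) \<le> of_int \<lfloor>x\<rfloor>" using hk[of "nat \<lfloor>x\<rfloor>"] lt r by simp
  have b: "h (gv G xs (Suc (nat \<lfloor>x\<rfloor>))) \<le> real (length xs) - (of_int \<lfloor>x\<rfloor> + 1)"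
    using hk[of "Suc (nat \<lfloor>x\<rfloor>)"] lt r by simp
  have "Hf h (Pc G xs x) = min (h (gv G xs (nat \<lfloor>x\<rfloor>)) + (x - of_int \<lfloor>x\<rfloor>))
     (h (gv G xs (Suc (nat \<lfloor>x\<rfloor>))) + 1 - (x - of_int \<lfloor>x\<rfloor>))" using False unfolding Pc_def by simp
  then show ?thesis using a b by (simp add: min_le_iff_disj)
qed


lemma cdist_nonneg: "p \<in> cpoints G S \<Longrightarrow> q \<in> cpoints G S \<Longrightarrow> 0 \<le> cdist G S p q"
  using lip[OF SG gen, of "\<lambda>_. 0" p q] by (simp add: vdist_vd)

lemma cyc_lower:
  assumes nochord: "\<forall>i j ys. 1 \<le> i \<and> real i \<le> 4 * \<delta> + 2 \<and> i < j \<and> j \<le> length xs \<and> set ys \<subseteq> Spm G S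
      \<and> wprod G (subw xs i j) = wprod G ys \<longrightarrow>
      \<not> int (length ys) \<le> min (int j - int i) (int (length xs) - int j + int i - 2)"
    and al: "a \<le> l" "l \<le> length xs" and ad: "real a + 1 \<le> 4 * \<delta> + 2"
  shows "real (min (l - a) (length xs - l + a)) \<le> vdist G S (gv G xs a) (gv G xs l)"
proof -
  consider "l = a" | "l = Suc a" | "Suc a < l" using al by linarith
  then show ?thesis
  proof cases
    case 1 then show ?thesis by (simp add: vdist_vd)
  next
    case 2
    have "vd S (gv G xs a) (gv G xs l) \<noteq> 0"
    proof
      assume "vd S (gv G xs a) (gv G xs l) = 0"
      then obtain w where w: "set w \<subseteq> Spm G S" "length w = 0" "gv G xs a \<otimes> wprod G w = gv G xs l"
        using vd_ex[OF SG gen gv_carrier gv_carrier] by metis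
      then have "gv G xs l = gv G xs a" using gv_carrier by simp
      moreover have "gv G xs l = gv G xs a \<otimes> wprod G (subw xs (Suc a) (Suc a))"
        using gv_sub[of "Suc a" "Suc a"] 2 al by simp
      moreover have "set (subw xs (Suc a) (Suc a)) \<subseteq> carrier G" using xs_carrier unfolding subw_def
        by (meson order_trans set_take_subset set_drop_subset)
      ultimately have "wprod G (subw xs (Suc a) (Suc a)) = \<one>"
        using gv_carrier wprod_closed by (metis l_cancel_one')
      then have "Suc a = 1 \<and> Suc a = length xs" using sr 2 al unfolding simple_relation_def by auto
      then show False using n2 by simp
    qed
    then have "1 \<le> vdist G S (gv G xs a) (gv G xs l)" unfolding vdist_vd by simp
    then show ?thesis using 2 by simp
  next
    case 3
    obtain w where w: "set w \<subseteq> Spm G S" "length w = vd S (gv G xs a) (gv G xs l)" "gv G xs a \<otimes> wprod G w = gv G xs l"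
      using vd_ex[OF SG gen gv_carrier gv_carrier] by metis
    have "gv G xs l = gv G xs a \<otimes> wprod G (subw xs (Suc a) l)"
      using gv_sub[of "Suc a" l] 3 al by simp
    moreover have "set (subw xs (Suc a) l) \<subseteq> carrier G" using xs_carrier unfolding subw_def
      by (meson order_trans set_take_subset set_drop_subset)
    moreover have "set w \<subseteq> carrier G" using w Spm_carrier[OF SG] by auto
    ultimately have "wprod G (subw xs (Suc a) l) = wprod G w"
      using w(3) gv_carrier wprod_closed by (metis l_cancel)
    then have "\<not> int (length w) \<le> min (int l - int (Suc a)) (int (length xs) - int l + int (Suc a) - 2)"
      using nochord[rule_format, of "Suc a" l w] 3 al ad w(1) by auto
    then show ?thesis using w(2) 3 al unfolding vdist_vd by auto
  qed
qed

lemma main_contra: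
  assumes hyp: "cayley_hyperbolic G S \<delta>" and len: "real (length xs) \<ge> 4 * \<delta> + 3"
    and nochord: "\<forall>i j ys. 1 \<le> i \<and> real i \<le> 4 * \<delta> + 2 \<and> i < j \<and> j \<le> length xs \<and> set ys \<subseteq> Spm G S
      \<and> wprod G (subw xs i j) = wprod G ys \<longrightarrow>
      \<not> int (length ys) \<le> min (int j - int i) (int (length xs) - int j + int i - 2)"
  shows False
proof -
  define n where "n = length xs"
  define N where "N = real n"
  have one_c: "\<one> \<in> carrier G" by simp
  have d0: "0 \<le> \<delta>"
  proof (rule ccontr)
    assume "\<not> 0 \<le> \<delta>"
    define \<gamma> where "\<gamma> = (\<lambda>_::real. V \<one>)"
    have c11: "cdist G S (V \<one>) (V \<one>) = 0"
    proof -
      have "cdist G S (V \<one>) (V \<one>) \<le> 0 + vdist G S \<one> \<one> + 0" by (rule cdist_le_ends) auto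
      moreover have "V \<one> \<in> cpoints G S" unfolding cpoints_def by auto
      ultimately show ?thesis using cdist_nonneg vd_refl[OF SG gen one_c] unfolding vdist_vd by force
    qed
    have gg: "geodesic G S \<gamma> 0" unfolding geodesic_def \<gamma>_def cpoints_def using c11 by auto
    have "in_nbhd G S \<delta> (\<gamma> ` {0..0}) (\<gamma> ` {0..0} \<union> \<gamma> ` {0..0})"
      using hyp gg unfolding cayley_hyperbolic_def \<gamma>_def by blast
    then have "\<forall>\<epsilon>>0. \<exists>q\<in>\<gamma> ` {0..0} \<union> \<gamma> ` {0..0}. cdist G S (V \<one>) q \<le> \<delta> + \<epsilon>"
      unfolding in_nbhd_def \<gamma>_def by simp
    moreover have "0 < - \<delta> / 2" using \<open>\<not> 0 \<le> \<delta>\<close> by simp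
    ultimately obtain q where "q \<in> \<gamma> ` {0..0} \<union> \<gamma> ` {0..0}" "cdist G S (V \<one>) q \<le> \<delta> + (- \<delta> / 2)"
      by blast
    then show False using c11 \<open>\<not> 0 \<le> \<delta>\<close> unfolding \<gamma>_def by auto
  qed
  define h0 where "h0 = (\<lambda>v. vdist G S \<one> v)"
  have HL0: "\<forall>u\<in>carrier G. \<forall>v\<in>carrier G. h0 v \<le> h0 u + vdist G S u v"
    unfolding h0_def vdist_vd using vd_tri[OF SG gen one_c] by (metis of_nat_add of_nat_le_iff)
  have h0k: "h0 (gv G xs k) = real (min k (n - k))" if "k \<le> n" for k
  proof -
    have "real (min (k - 0) (length xs - k + 0)) \<le> vdist G S (gv G xs 0) (gv G xs k)"
      by (rule cyc_lower[OF nochord]) (use that d0 n_def in auto)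
    moreover have "vd S \<one> (gv G xs k) \<le> k" using vd_fwd[of 0 k] that gv_0 n_def by simp
    moreover have "vd S \<one> (gv G xs k) \<le> n - k" using vd_bwd[of k n] that gv_n n_def by simp
    ultimately show ?thesis unfolding h0_def gv_0 vdist_vd n_def by simp
  qed
  have H0: "Hf h0 (Pc G xs x) = min x (N - x)" if "0 \<le> x" "x \<le> N" for x
  proof (rule antisym)
    show "Hf h0 (Pc G xs x) \<le> min x (N - x)"
      using Hf_upper[of x h0] that h0k unfolding N_def n_def by simp
    show "min x (N - x) \<le> Hf h0 (Pc G xs x)"
      by (rule Hf_lower[of 0]) (use that h0k in \<open>auto simp: N_def n_def\<close>)
  qed
  have cp: "Pc G xs x \<in> cpoints G S" if "0 \<le> x" "x \<le> N" for x
    using Pc_cpoints that unfolding N_def n_def by simp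
  have up: "cdist G S (Pc G xs s) (Pc G xs t) \<le> \<bar>s - t\<bar>" if "0 \<le> s" "s \<le> N" "0 \<le> t" "t \<le> N" for s t
    using Pc_upper that unfolding N_def n_def by simp
  have lo: "\<bar>min s (N - s) - min t (N - t)\<bar> \<le> cdist G S (Pc G xs s) (Pc G xs t)"
    if "0 \<le> s" "s \<le> N" "0 \<le> t" "t \<le> N" for s t
    using lip[OF SG gen HL0 cp[of s] cp[of t]] H0 that by simp
  define \<gamma>1 where "\<gamma>1 = Pc G xs"
  define \<gamma>2 where "\<gamma>2 = (\<lambda>_::real. Pc G xs (N / 2))"
  define \<gamma>3 where "\<gamma>3 = (\<lambda>t. Pc G xs (N / 2 + t))"
  have N0: "0 \<le> N" unfolding N_def by simp
  have g1: "geodesic G S \<gamma>1 (N / 2)"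
    unfolding geodesic_def \<gamma>1_def
  proof (intro conjI ballI)
    show "0 \<le> N / 2" using N0 by simp
    show "Pc G xs ` {0..N / 2} \<subseteq> cpoints G S" using cp N0 by auto
  next
    fix s t assume "s \<in> {0..N/2}" "t \<in> {0..N/2}"
    then show "cdist G S (Pc G xs s) (Pc G xs t) = \<bar>s - t\<bar>"
      using up[of s t] lo[of s t] by (auto simp: min_def)
  qed
  have g3: "geodesic G S \<gamma>3 (N / 2)"
    unfolding geodesic_def \<gamma>3_def
  proof (intro conjI ballI)
    show "0 \<le> N / 2" using N0 by simp
    show "(\<lambda>t. Pc G xs (N / 2 + t)) ` {0..N / 2} \<subseteq> cpoints G S" using cp N0 by auto
  next
    fix s t assume "s \<in> {0..N/2}" "t \<in> {0..N/2}"
    then show "cdist G S (Pc G xs (N / 2 + s)) (Pc G xs (N / 2 + t)) = \<bar>s - t\<bar>"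
    proof -
      assume st: "s \<in> {0..N/2}" "t \<in> {0..N/2}"
      have m: "min (N/2 + x) (N - (N/2 + x)) = N/2 - x" if "0 \<le> x" for x using that by (simp add: min_def)
      have a: "\<bar>(N/2 - s) - (N/2 - t)\<bar> = \<bar>s - t\<bar>" by (simp add: abs_minus_commute)
      have "\<bar>(N/2 - s) - (N/2 - t)\<bar> \<le> cdist G S (Pc G xs (N / 2 + s)) (Pc G xs (N / 2 + t))"
        using lo[of "N/2 + s" "N/2 + t"] m[of s] m[of t] st by simp
      then show ?thesis using a up[of "N/2 + s" "N/2 + t"] st by simp
    qed
  qed
  have g2: "geodesic G S \<gamma>2 0"
    unfolding geodesic_def \<gamma>2_def using cp[of "N/2"] N0 up[of "N/2" "N/2"] cdist_nonneg[OF cp[of "N/2"] cp[of "N/2"]]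
    by auto
  have e1: "\<gamma>1 (N / 2) = \<gamma>2 0" "\<gamma>2 0 = \<gamma>3 0" unfolding \<gamma>1_def \<gamma>2_def \<gamma>3_def by simp_all
  have e3: "\<gamma>3 (N / 2) = \<gamma>1 0"
  proof -
    have "\<gamma>3 (N / 2) = Pc G xs (real n)" unfolding \<gamma>3_def N_def by simp
    also have "\<dots> = V \<one>" using gv_n n_def by simp
    also have "\<dots> = \<gamma>1 0" unfolding \<gamma>1_def using Pc_int[of G xs 0] gv_0 by simp
    finally show ?thesis .
  qed
  have nb: "in_nbhd G S \<delta> (\<gamma>1 ` {0..N / 2}) (\<gamma>2 ` {0..0} \<union> \<gamma>3 ` {0..N / 2})"
    using hyp g1 g2 g3 e1 e3 unfolding cayley_hyperbolic_def by blast
  define p where "p = nat (\<lfloor>\<delta>\<rfloor> + 1)"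
  have rp: "real p = of_int \<lfloor>\<delta>\<rfloor> + 1" unfolding p_def using d0 by simp
  have pd: "\<delta> < real p" "real p \<le> \<delta> + 1" using rp by linarith+
  have pa: "real p + 1 \<le> 4 * \<delta> + 2" using rp d0 of_int_floor_le[of \<delta>] by linarith
  have NN: "N \<ge> 4 * \<delta> + 3" using len unfolding N_def n_def .
  define D where "D = min (real p) (N / 2 - real p)"
  have Dd: "\<delta> < D" unfolding D_def using pd NN by simp
  have pin: "\<gamma>1 (real p) \<in> \<gamma>1 ` {0..N / 2}" using pd NN d0 by auto
  obtain q where q: "q \<in> \<gamma>2 ` {0..0} \<union> \<gamma>3 ` {0..N / 2}" "cdist G S (\<gamma>1 (real p)) q \<le> \<delta> + (D - \<delta>) / 2"
    using nb pin Dd unfolding in_nbhd_def by (metis half_gt_zero diff_gt_0_iff_gt)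
  have "\<exists>u. q = Pc G xs u \<and> N / 2 \<le> u \<and> u \<le> N"
    using q(1)
  proof
    assume "q \<in> \<gamma>2 ` {0..0}" then have "q = Pc G xs (N/2)" unfolding \<gamma>2_def by auto
    then show ?thesis using N0 by (intro exI[of _ "N/2"]) auto
  next
    assume "q \<in> \<gamma>3 ` {0..N/2}"
    then obtain t where "t \<in> {0..N/2}" "q = Pc G xs (N/2 + t)" unfolding \<gamma>3_def by auto
    then show ?thesis by (intro exI[of _ "N/2+t"]) auto
  qed
  then obtain u where u: "q = Pc G xs u" "N / 2 \<le> u" "u \<le> N" by blast
  define hp where "hp = (\<lambda>v. vdist G S (gv G xs p) v)"
  have HLp: "\<forall>u\<in>carrier G. \<forall>v\<in>carrier G. hp v \<le> hp u + vdist G S u v"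
    unfolding hp_def vdist_vd using vd_tri[OF SG gen gv_carrier] by (metis of_nat_add of_nat_le_iff)
  define F where "F = (\<lambda>x. min (x - real p) (N - x + real p))"
  have pN: "p \<le> n" using pd NN d0 unfolding N_def by linarith
  have Fu: "F u \<le> Hf hp (Pc G xs u)"
  proof (rule Hf_lower[of p])
    show "real p \<le> u" using u pd NN d0 by linarith
    show "u \<le> real (length xs)" using u unfolding N_def n_def by simp
    show "F a \<le> F b + \<bar>a - b\<bar>" for a b unfolding F_def by (auto simp: min_def abs_if)
    fix k assume k: "p \<le> k" "k \<le> length xs"
    have "real (min (k - p) (length xs - k + p)) \<le> vdist G S (gv G xs p) (gv G xs k)"
      by (rule cyc_lower[OF nochord k pa])
    then show "F (real k) \<le> hp (gv G xs k)" unfolding F_def hp_def N_def n_def using k by simp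
  qed
  have Hpp: "Hf hp (\<gamma>1 (real p)) = 0"
    unfolding \<gamma>1_def hp_def using vd_refl[OF SG gen gv_carrier] by (simp add: vdist_vd)
  have "\<bar>Hf hp (\<gamma>1 (real p)) - Hf hp (Pc G xs u)\<bar> \<le> cdist G S (\<gamma>1 (real p)) (Pc G xs u)"
    unfolding \<gamma>1_def by (rule lip[OF SG gen HLp cp cp]) (use pd pN u NN d0 N_def in auto)
  then have "F u \<le> cdist G S (\<gamma>1 (real p)) q" using Hpp Fu u by simp
  moreover have "D \<le> F u" unfolding F_def D_def using u pd by auto
  ultimately have "D \<le> \<delta> + (D - \<delta>) / 2" using q(2) by linarith
  then show False using Dd by (simp add: field_simps)
qed

end
end


theorem corollary5:
  fixes G :: "('a, 'b) monoid_scheme" and S :: "'a set" and \<delta> :: real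
  assumes "group G" and "S \<subseteq> carrier G" and "finite S" and "generate G S = carrier G"
    and "cayley_hyperbolic G S \<delta>"
  shows "chordal G S (4 * \<delta> + 2) (4 * \<delta> + 3)"
  unfolding chordal_def
proof (intro allI impI)
  fix xs assume h: "simple_relation G S xs \<and> 4 * \<delta> + 3 \<le> real (length xs)"
  show "\<exists>i j ys. 1 \<le> i \<and> real i \<le> 4 * \<delta> + 2 \<and> i < j \<and> j \<le> length xs \<and>
           set ys \<subseteq> Spm G S \<and> wprod G (subw xs i j) = wprod G ys \<and>
           int (length ys) \<le> min (int j - int i) (int (length xs) - int j + int i - 2)"
  proof (rule ccontr)
    assume nc: "\<not> ?thesis"
    have nochord: "\<forall>i j ys. 1 \<le> i \<and> real i \<le> 4 * \<delta> + 2 \<and> i < j \<and> j \<le> length xs \<and> set ys \<subseteq> Spm G S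
      \<and> wprod G (subw xs i j) = wprod G ys \<longrightarrow>
      \<not> int (length ys) \<le> min (int j - int i) (int (length xs) - int j + int i - 2)"
      using nc by blast
    show False
      using group.main_contra[OF assms(1) assms(2) assms(4) h[THEN conjunct1] assms(5) h[THEN conjunct2] nochord] .
  qed
qed

end
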